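(* Let $n\geq 2$ and let $B$ be a subgroup of $P\Sigma_n$. If the homomorphism $\tau_1^{(B)}:gr^1(B)=B^{ab}\to IA_n^{ab}$ (induced by the inclusion $B\subseteq IA_n$) is injective, then $\mathcal{A}_n(2)\cap B=\Gamma_2(B)$.
   Context: $F_n$ is the free group on $x_1,\dots,x_n$; $\Gamma_k$ denotes the lower central series ($\Gamma_1(G)=G$, $\Gamma_{k+1}(G)=(\Gamma_k(G),G)$), and $\mathcal{A}_n(k)=\{\phi\in\mathrm{Aut}(F_n): g^{-1}\phi(g)\in\Gamma_{k+1}(F_n)\ \forall g\in F_n\}$; $IA_n=\mathcal{A}_n(1)$. $P\Sigma_n$ (the McCool group) is the subgroup of $\mathrm{Aut}(F_n)$ generated by the automorphisms $\xi_{i,j}$, $1\leq i\neq j\leq n$, where $\xi_{i,j}(x_i)=x_j^{-1}x_ix_j$ and $\xi_{i,j}(x_l)=x_l$ for $l\neq i$. The map $\tau_1^{(B)}$ is the composition $gr^1(B)\to (B\cap\mathcal{A}_n(1))/(B\cap\mathcal{A}_n(2))\hookrightarrow \mathcal{A}_n(1)/\mathcal{A}_n(2)=IA_n^{ab}$. *)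

theory Defs
  imports "HOL-Algebra.Algebra"
begin

text \<open>A letter (i, True) stands for x_i, (i, False) for x_i^{-1}.\<close>
type_synonym letter = "nat \<times> bool"

definition cancels :: "letter \<Rightarrow> letter \<Rightarrow> bool" where
  "cancels a b \<longleftrightarrow> fst a = fst b \<and> snd a \<noteq> snd b"

fun reduced :: "letter list \<Rightarrow> bool" where
  "reduced [] = True"
| "reduced [a] = True"
| "reduced (a # b # w) = (\<not> cancels a b \<and> reduced (b # w))"

definition reduce :: "letter list \<Rightarrow> letter list" where
  "reduce w = foldr (\<lambda>a acc. case acc of [] \<Rightarrow> [a]
                        | b # rest \<Rightarrow> (if cancels a b then rest else a # acc)) w []"

definition inv_word :: "letter list \<Rightarrow> letter list" where
  "inv_word w = rev (map (\<lambda>(i, b). (i, \<not> b)) w)"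

definition free_group :: "nat \<Rightarrow> letter list monoid" where
  "free_group n = \<lparr> carrier = {w. reduced w \<and> (\<forall>a\<in>set w. fst a \<in> {1..n})},
                    monoid.mult = (\<lambda>u v. reduce (u @ v)),
                    one = [] \<rparr>"

definition subst_hom :: "nat \<Rightarrow> (nat \<Rightarrow> letter list) \<Rightarrow> letter list \<Rightarrow> letter list" where
  "subst_hom n f = (\<lambda>w \<in> carrier (free_group n).
      reduce (concat (map (\<lambda>(i, b). if b then f i else inv_word (f i)) w)))"

definition commutator :: "('a, 'b) monoid_scheme \<Rightarrow> 'a \<Rightarrow> 'a \<Rightarrow> 'a" where
  "commutator G x y = inv\<^bsub>G\<^esub> x \<otimes>\<^bsub>G\<^esub> inv\<^bsub>G\<^esub> y \<otimes>\<^bsub>G\<^esub> x \<otimes>\<^bsub>G\<^esub> y"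

text \<open>lcs G k = Gamma_k(G), with Gamma_1(G) = G (Gamma_0 also set to G).\<close>
fun lcs :: "('a, 'b) monoid_scheme \<Rightarrow> nat \<Rightarrow> 'a set" where
  "lcs G 0 = carrier G"
| "lcs G (Suc 0) = carrier G"
| "lcs G (Suc (Suc k)) =
     generate G (\<Union>x\<in>lcs G (Suc k). \<Union>y\<in>carrier G. {commutator G x y})"

abbreviation AutF :: "nat \<Rightarrow> (letter list \<Rightarrow> letter list) monoid" where
  "AutF n \<equiv> AutoGroup (free_group n)"

definition Andreadakis :: "nat \<Rightarrow> nat \<Rightarrow> (letter list \<Rightarrow> letter list) set" where
  "Andreadakis n k = {\<phi> \<in> auto (free_group n).
     \<forall>g \<in> carrier (free_group n).
       inv\<^bsub>free_group n\<^esub> g \<otimes>\<^bsub>free_group n\<^esub> \<phi> g \<in> lcs (free_group n) (Suc k)}"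

definition xi :: "nat \<Rightarrow> nat \<Rightarrow> nat \<Rightarrow> letter list \<Rightarrow> letter list" where
  "xi n i j = subst_hom n (\<lambda>l. if l = i then [(j, False), (i, True), (j, True)] else [(l, True)])"

definition McCool :: "nat \<Rightarrow> (letter list \<Rightarrow> letter list) set" where
  "McCool n = generate (AutF n) {xi n i j | i j. i \<in> {1..n} \<and> j \<in> {1..n} \<and> i \<noteq> j}"

abbreviation subgrp :: "nat \<Rightarrow> (letter list \<Rightarrow> letter list) set \<Rightarrow> (letter list \<Rightarrow> letter list) monoid" where
  "subgrp n B \<equiv> (AutF n)\<lparr>carrier := B\<rparr>"

abbreviation gr1 :: "nat \<Rightarrow> (letter list \<Rightarrow> letter list) set \<Rightarrow> (letter list \<Rightarrow> letter list) set monoid" where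
  "gr1 n B \<equiv> subgrp n B Mod lcs (subgrp n B) 2"

abbreviation IA_ab :: "nat \<Rightarrow> (letter list \<Rightarrow> letter list) set monoid" where
  "IA_ab n \<equiv> subgrp n (Andreadakis n 1) Mod Andreadakis n 2"

text \<open>tau_1^{(B)} sends the coset Gamma_2(B) b to the coset A_n(2) b.\<close>
definition tau1 :: "nat \<Rightarrow> (letter list \<Rightarrow> letter list) set \<Rightarrow> (letter list \<Rightarrow> letter list) set"
  where "tau1 n C = (\<Union>b\<in>C. Andreadakis n 2 #>\<^bsub>AutF n\<^esub> b)"

end

theory Submission
  imports Defs
begin


definition stp :: "letter \<Rightarrow> letter list \<Rightarrow> letter list" where
  "stp a acc = (case acc of [] \<Rightarrow> [a] | b # rest \<Rightarrow> (if cancels a b then rest else a # acc))"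

definition flp :: "letter \<Rightarrow> letter" where "flp a = (fst a, \<not> snd a)"

lemma reduce_foldr: "reduce w = foldr stp w []"
  unfolding reduce_def stp_def by simp

lemma reduce_Cons: "reduce (a # w) = stp a (reduce w)"
  by (simp add: reduce_foldr)

lemma reduce_append: "reduce (u @ v) = foldr stp u (reduce v)"
  by (simp add: reduce_foldr)

lemma reduced_tl: "reduced (b # w) \<Longrightarrow> reduced w"
  by (cases w) auto

lemma reduced_stp: "reduced s \<Longrightarrow> reduced (stp a s)"
  by (cases s) (auto simp: stp_def intro: reduced_tl)

lemma reduced_foldr: "reduced s \<Longrightarrow> reduced (foldr stp x s)"
  by (induction x) (auto intro: reduced_stp)

lemma reduced_reduce: "reduced (reduce w)"
  by (simp add: reduce_foldr reduced_foldr)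

lemma set_stp: "set (stp a s) \<subseteq> insert a (set s)"
  by (cases s) (auto simp: stp_def)

lemma set_foldr: "set (foldr stp x s) \<subseteq> set x \<union> set s"
  apply (induction x) using set_stp by fastforce+

lemma set_reduce: "set (reduce w) \<subseteq> set w"
  using set_foldr[of w "[]"] by (simp add: reduce_foldr)

lemma cancels_flp: "cancels a b \<longleftrightarrow> b = flp a"
  by (cases a; cases b) (auto simp: cancels_def flp_def)

lemma flp_flp[simp]: "flp (flp a) = a"
  by (cases a) (simp add: flp_def)

lemma stp_flp: "reduced s \<Longrightarrow> stp (flp a) (stp a s) = s"
proof (cases s)
  case Nil then show ?thesis by (simp add: stp_def cancels_flp)
next
  case (Cons b rest)
  assume r: "reduced s"
  show ?thesis
  proof (cases "cancels a b")
    case True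
    then have b: "b = flp a" by (simp add: cancels_flp)
    show ?thesis
    proof (cases rest)
      case Nil then show ?thesis using Cons True b by (simp add: stp_def)
    next
      case (Cons c rest')
      have "\<not> cancels b c" using r \<open>s = b # rest\<close> Cons by simp
      then have "c \<noteq> flp b" by (simp add: cancels_flp)
      then have "\<not> cancels (flp a) c" using b by (simp add: cancels_flp)
      then show ?thesis using \<open>s = b # rest\<close> Cons True b by (simp add: stp_def)
    qed
  next
    case False
    then show ?thesis using Cons by (simp add: stp_def cancels_flp)
  qed
qed

lemma reduce_reduced: "reduced w \<Longrightarrow> reduce w = w"
proof (induction w)
  case Nil then show ?case by (simp add: reduce_foldr)
next
  case (Cons a w)
  then have IH: "reduce w = w" using reduced_tl by blast
  show ?case
  proof (cases w)
    case Nil then show ?thesis by (simp add: reduce_foldr stp_def)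
  next
    case (Cons b rest)
    then show ?thesis using Cons.prems IH by (simp add: reduce_Cons stp_def)
  qed
qed

lemma foldr_stp_stp:
  assumes "reduced s" shows "foldr stp (stp a r) s = stp a (foldr stp r s)"
proof (cases r)
  case Nil then show ?thesis by (simp add: stp_def)
next
  case (Cons b rest)
  show ?thesis
  proof (cases "cancels a b")
    case True
    then have "a = flp b" by (metis cancels_flp flp_flp)
    then show ?thesis using Cons True stp_flp[OF reduced_foldr[OF assms], of b rest]
      by (simp add: stp_def)
  next
    case False then show ?thesis using Cons by (simp add: stp_def)
  qed
qed

lemma foldr_reduce: "reduced s \<Longrightarrow> foldr stp (reduce x) s = foldr stp x s"
  by (induction x) (simp_all add: reduce_foldr[symmetric] reduce_Cons foldr_stp_stp, simp add: reduce_foldr)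

lemma inv_word_Cons: "inv_word (a # w) = inv_word w @ [flp a]"
  by (cases a) (simp add: inv_word_def flp_def)

lemma inv_word_inv_word[simp]: "inv_word (inv_word w) = w"
  by (induction w) (auto simp: inv_word_def)

lemma foldr_inv_word: "reduced s \<Longrightarrow> foldr stp (inv_word w) (foldr stp w s) = s"
  by (induction w) (simp_all add: inv_word_Cons stp_flp reduced_foldr, simp add: inv_word_def)

lemma foldr_inv_word2: "reduced s \<Longrightarrow> foldr stp w (foldr stp (inv_word w) s) = s"
  using foldr_inv_word[of s "inv_word w"] by simp

lemma fg_carrier: "carrier (free_group n) = {w. reduced w \<and> (\<forall>a\<in>set w. fst a \<in> {1..n})}"
  by (simp add: free_group_def)

lemma fg_mult: "x \<otimes>\<^bsub>free_group n\<^esub> y = reduce (x @ y)"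
  by (simp add: free_group_def)

lemma fg_one: "\<one>\<^bsub>free_group n\<^esub> = []"
  by (simp add: free_group_def)

lemma fg_mult_foldr: "y \<in> carrier (free_group n) \<Longrightarrow> x \<otimes>\<^bsub>free_group n\<^esub> y = foldr stp x y"
  by (simp add: fg_mult reduce_append fg_carrier reduce_reduced)

lemma reduce_in_carrier: "\<forall>a\<in>set w. fst a \<in> {1..n} \<Longrightarrow> reduce w \<in> carrier (free_group n)"
  using set_reduce[of w] reduced_reduce[of w] by (auto simp: fg_carrier)

lemma fg_mult_closed:
  assumes "x \<in> carrier (free_group n)" "y \<in> carrier (free_group n)"
  shows "x \<otimes>\<^bsub>free_group n\<^esub> y \<in> carrier (free_group n)"
proof -
  have "\<forall>a\<in>set (x@y). fst a \<in> {1..n}" using assms by (auto simp: fg_carrier)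
  then show ?thesis unfolding fg_mult by (rule reduce_in_carrier)
qed

lemma group_fg: "group (free_group n)"
proof (rule groupI)
  fix x y assume "x \<in> carrier (free_group n)" "y \<in> carrier (free_group n)"
  then show "x \<otimes>\<^bsub>free_group n\<^esub> y \<in> carrier (free_group n)"
    by (rule fg_mult_closed)
next
  show "\<one>\<^bsub>free_group n\<^esub> \<in> carrier (free_group n)" by (simp add: fg_one fg_carrier)
next
  fix x y z assume xyz: "x \<in> carrier (free_group n)" "y \<in> carrier (free_group n)" "z \<in> carrier (free_group n)"
  then have rz: "reduced z" by (simp add: fg_carrier)
  have yz: "y \<otimes>\<^bsub>free_group n\<^esub> z \<in> carrier (free_group n)"
    using xyz by (simp add: fg_mult_closed)
  show "x \<otimes>\<^bsub>free_group n\<^esub> y \<otimes>\<^bsub>free_group n\<^esub> z =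
        x \<otimes>\<^bsub>free_group n\<^esub> (y \<otimes>\<^bsub>free_group n\<^esub> z)"
  proof -
    have ry: "reduced y" using xyz by (simp add: fg_carrier)
    have "foldr stp x y = reduce (x @ y)" by (simp add: reduce_append reduce_reduced ry)
    then have "foldr stp (foldr stp x y) z = foldr stp (x @ y) z" by (simp add: foldr_reduce rz)
    then show ?thesis using xyz yz by (simp add: fg_mult_foldr)
  qed
next
  fix x assume "x \<in> carrier (free_group n)"
  then show "\<one>\<^bsub>free_group n\<^esub> \<otimes>\<^bsub>free_group n\<^esub> x = x"
    by (simp add: fg_one fg_mult reduce_reduced fg_carrier)
next
  fix x assume x: "x \<in> carrier (free_group n)"
  have "reduce (inv_word x) \<in> carrier (free_group n)"
    using x by (intro reduce_in_carrier) (auto simp: fg_carrier inv_word_def)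
  moreover have "reduce (inv_word x) \<otimes>\<^bsub>free_group n\<^esub> x = \<one>\<^bsub>free_group n\<^esub>"
  proof -
    have rx: "reduced x" using x by (simp add: fg_carrier)
    have "foldr stp x [] = x" using reduce_reduced[OF rx] by (simp add: reduce_foldr)
    then have "foldr stp (inv_word x) x = []" using foldr_inv_word[of "[]" x] by simp
    then show ?thesis using x rx by (simp add: fg_mult_foldr foldr_reduce fg_one)
  qed
  ultimately show "\<exists>y\<in>carrier (free_group n). y \<otimes>\<^bsub>free_group n\<^esub> x = \<one>\<^bsub>free_group n\<^esub>" by blast
qed

definition ev :: "(nat \<Rightarrow> letter list) \<Rightarrow> letter \<Rightarrow> letter list" where
  "ev f = (\<lambda>(i, b). if b then f i else inv_word (f i))"

definition EE :: "(nat \<Rightarrow> letter list) \<Rightarrow> letter list \<Rightarrow> letter list" where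
  "EE f w = concat (map (ev f) w)"

lemma subst_hom_EE: "w \<in> carrier (free_group n) \<Longrightarrow> subst_hom n f w = reduce (EE f w)"
  by (simp add: subst_hom_def EE_def ev_def)

lemma ev_flp: "reduced t \<Longrightarrow> foldr stp (ev f (flp a)) (foldr stp (ev f a) t) = t"
  by (cases a) (auto simp: ev_def flp_def foldr_inv_word foldr_inv_word2)

lemma EE_Cons: "EE f (a # r) = ev f a @ EE f r"
  by (simp add: EE_def)

lemma EE_stp: assumes "reduced t"
  shows "foldr stp (EE f (stp a r)) t = foldr stp (ev f a) (foldr stp (EE f r) t)"
proof (cases r)
  case Nil then show ?thesis by (simp add: stp_def EE_def)
next
  case (Cons b rest)
  show ?thesis
  proof (cases "cancels a b")
    case True
    then have "a = flp b" by (metis cancels_flp flp_flp)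
    then show ?thesis using Cons True ev_flp[OF reduced_foldr[OF assms], of f b "EE f rest"]
      by (simp add: stp_def EE_Cons)
  next
    case False then show ?thesis using Cons by (simp add: stp_def EE_Cons)
  qed
qed

lemma EE_reduce: "reduced t \<Longrightarrow> foldr stp (EE f (reduce x)) t = foldr stp (EE f x) t"
proof (induction x)
  case Nil then show ?case by (simp add: reduce_foldr EE_def)
next
  case (Cons a x)
  then show ?case by (simp add: reduce_Cons EE_stp EE_Cons)
qed

lemma set_inv_word: "fst ` set (inv_word w) = fst ` set w"
  by (force simp: inv_word_def image_iff)

lemma subst_hom_closed:
  assumes f: "\<And>i. i \<in> {1..n} \<Longrightarrow> f i \<in> carrier (free_group n)"
    and w: "w \<in> carrier (free_group n)"
  shows "subst_hom n f w \<in> carrier (free_group n)"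
proof -
  have "\<forall>a\<in>set (EE f w). fst a \<in> {1..n}"
  proof
    fix a assume "a \<in> set (EE f w)"
    then obtain c where c: "c \<in> set w" "a \<in> set (ev f c)" by (auto simp: EE_def)
    then have ci: "fst c \<in> {1..n}" using w by (auto simp: fg_carrier)
    then have fc: "\<forall>x\<in>set (f (fst c)). fst x \<in> {1..n}" using f by (auto simp: fg_carrier)
    show "fst a \<in> {1..n}"
    proof (cases "snd c")
      case True then show ?thesis using c fc by (cases c) (auto simp: ev_def)
    next
      case False
      then have "a \<in> set (inv_word (f (fst c)))" using c by (cases c) (auto simp: ev_def)
      then have "fst a \<in> fst ` set (f (fst c))" using set_inv_word by blast
      then show ?thesis using fc by auto
    qed
  qed
  then show ?thesis using w by (simp add: subst_hom_EE reduce_in_carrier)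
qed

lemma subst_hom_hom:
  assumes f: "\<And>i. i \<in> {1..n} \<Longrightarrow> f i \<in> carrier (free_group n)"
  shows "subst_hom n f \<in> hom (free_group n) (free_group n)"
proof (rule homI)
  fix x assume "x \<in> carrier (free_group n)"
  then show "subst_hom n f x \<in> carrier (free_group n)" using f subst_hom_closed by blast
next
  fix x y assume x: "x \<in> carrier (free_group n)" and y: "y \<in> carrier (free_group n)"
  have xy: "x \<otimes>\<^bsub>free_group n\<^esub> y \<in> carrier (free_group n)" using x y by (rule fg_mult_closed)
  have hx: "subst_hom n f x \<in> carrier (free_group n)" using f x subst_hom_closed by blast
  have hy: "subst_hom n f y \<in> carrier (free_group n)" using f y subst_hom_closed by blast
  have "subst_hom n f (x \<otimes>\<^bsub>free_group n\<^esub> y) = foldr stp (EE f (reduce (x @ y))) []"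
    using xy by (simp add: subst_hom_EE reduce_foldr fg_mult)
  also have "\<dots> = foldr stp (EE f x) (foldr stp (EE f y) [])"
  proof -
    have "foldr stp (EE f (reduce (x @ y))) [] = foldr stp (EE f (x @ y)) []" by (simp add: EE_reduce)
    then show ?thesis by (simp add: EE_def)
  qed
  also have "\<dots> = subst_hom n f x \<otimes>\<^bsub>free_group n\<^esub> subst_hom n f y"
    using x y hy by (simp add: fg_mult_foldr subst_hom_EE foldr_reduce reduced_reduce reduce_foldr[symmetric])
  finally show "subst_hom n f (x \<otimes>\<^bsub>free_group n\<^esub> y) =
     subst_hom n f x \<otimes>\<^bsub>free_group n\<^esub> subst_hom n f y" .
qed



context group begin

lemma inv_cancel_left: "x \<in> carrier G \<Longrightarrow> z \<in> carrier G \<Longrightarrow> inv x \<otimes> (x \<otimes> z) = z"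
  by (simp add: m_assoc[symmetric])

lemma inv_cancel_left2: "x \<in> carrier G \<Longrightarrow> z \<in> carrier G \<Longrightarrow> x \<otimes> (inv x \<otimes> z) = z"
  by (simp add: m_assoc[symmetric])

lemma comm_closed: "x \<in> carrier G \<Longrightarrow> y \<in> carrier G \<Longrightarrow> commutator G x y \<in> carrier G"
  by (simp add: commutator_def)

lemma hom_commutator:
  assumes H: "group H" and h: "h \<in> hom G H" and x: "x \<in> carrier G" and y: "y \<in> carrier G"
  shows "h (commutator G x y) = commutator H (h x) (h y)"
proof -
  interpret hh: group_hom G H h
    by (intro group_hom.intro group_hom_axioms.intro) (simp_all add: H h is_group)
  show ?thesis using x y by (simp add: commutator_def)
qed

lemma conj_hom: "g \<in> carrier G \<Longrightarrow> (\<lambda>z. g \<otimes> z \<otimes> inv g) \<in> hom G G"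
  by (rule homI) (simp_all add: m_assoc inv_cancel_left)

lemma lcs_normal_Suc: "lcs G (Suc k) \<lhd> G"
proof (induction k)
  case 0
  show ?case by (simp add: normal_invI[OF subgroup_self])
next
  case (Suc k)
  interpret N: normal "lcs G (Suc k)" G by (rule Suc.IH)
  let ?T = "\<Union>x\<in>lcs G (Suc k). \<Union>y\<in>carrier G. {commutator G x y}"
  have T: "?T \<subseteq> carrier G" using N.subset by (auto intro: comm_closed)
  have "generate G ?T \<lhd> G"
  proof (rule normal_generateI[OF T])
    fix h g assume h: "h \<in> ?T" and g: "g \<in> carrier G"
    then obtain x y where xy: "x \<in> lcs G (Suc k)" "y \<in> carrier G" "h = commutator G x y" by blast
    have xc: "x \<in> carrier G" using xy N.subset by blast
    have "g \<otimes> h \<otimes> inv g = commutator G (g \<otimes> x \<otimes> inv g) (g \<otimes> y \<otimes> inv g)"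
      using hom_commutator[OF is_group conj_hom[OF g] xc xy(2)] xy(3) by simp
    moreover have "g \<otimes> x \<otimes> inv g \<in> lcs G (Suc k)" using N.inv_op_closed2 g xy(1) by blast
    moreover have "g \<otimes> y \<otimes> inv g \<in> carrier G" using g xy by simp
    ultimately show "g \<otimes> h \<otimes> inv g \<in> ?T" by blast
  qed
  then show ?case by simp
qed

lemma lcs_normal: "lcs G k \<lhd> G"
  using lcs_normal_Suc[of 0] lcs_normal_Suc by (cases k) simp_all

lemma lcs_subgroup: "subgroup (lcs G k) G"
  using lcs_normal normal_imp_subgroup by blast

lemma lcs_sub: "lcs G k \<subseteq> carrier G"
  using lcs_subgroup subgroup.subset by blast

lemma comm_in_lcs: "x \<in> lcs G (Suc k) \<Longrightarrow> y \<in> carrier G \<Longrightarrow> commutator G x y \<in> lcs G (Suc (Suc k))"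
  by (auto intro: generate.incl)

lemma hom_generate:
  assumes h: "h \<in> hom G G" and S: "S \<subseteq> carrier G" and hS: "\<And>s. s \<in> S \<Longrightarrow> h s \<in> S"
    and x: "x \<in> generate G S"
  shows "h x \<in> generate G S"
proof -
  interpret hh: group_hom G G h
    by (intro group_hom.intro group_hom_axioms.intro) (simp_all add: h is_group)
  show ?thesis using x
  proof (induction rule: generate.induct)
    case one show ?case by (simp add: generate.one)
  next
    case (incl s) then show ?case using hS by (auto intro: generate.incl)
  next
    case (inv s)
    then have "h (inv s) = inv (h s)" using S by auto
    then show ?case using hS inv by (auto intro: generate.inv)
  next
    case (eng a b) then show ?case using generate_in_carrier[OF S] by (auto intro: generate.eng)
  qed
qed

lemma hom_lcs_Suc: "h \<in> hom G G \<Longrightarrow> x \<in> lcs G (Suc k) \<Longrightarrow> h x \<in> lcs G (Suc k)"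
proof (induction k arbitrary: x)
  case 0 then show ?case by (auto simp: hom_def)
next
  case (Suc k)
  let ?T = "\<Union>x\<in>lcs G (Suc k). \<Union>y\<in>carrier G. {commutator G x y}"
  have T: "?T \<subseteq> carrier G" using lcs_sub by (auto intro: comm_closed)
  have "h s \<in> ?T" if "s \<in> ?T" for s
  proof -
    obtain a b where ab: "a \<in> lcs G (Suc k)" "b \<in> carrier G" "s = commutator G a b" using \<open>s \<in> ?T\<close> by blast
    have "h s = commutator G (h a) (h b)"
      using hom_commutator[OF is_group Suc.prems(1)] ab lcs_sub by blast
    moreover have "h a \<in> lcs G (Suc k)" using Suc.IH Suc.prems(1) ab(1) by blast
    moreover have "h b \<in> carrier G" using Suc.prems(1) ab(2) by (auto simp: hom_def)
    ultimately show ?thesis by blast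
  qed
  then show ?case using hom_generate[OF Suc.prems(1) T] Suc.prems(2) by simp
qed

lemma hom_lcs: "h \<in> hom G G \<Longrightarrow> x \<in> lcs G k \<Longrightarrow> h x \<in> lcs G k"
  using hom_lcs_Suc[of h x 0] hom_lcs_Suc by (cases k) simp_all

lemma equalizer_subgroup:
  assumes H: "group H" and f: "f \<in> hom G H" and g: "g \<in> hom G H"
  shows "subgroup {x \<in> carrier G. f x = g x} G"
proof -
  interpret f: group_hom G H f
    by (intro group_hom.intro group_hom_axioms.intro) (simp_all add: H f is_group)
  interpret g: group_hom G H g
    by (intro group_hom.intro group_hom_axioms.intro) (simp_all add: H g is_group)
  show ?thesis by (rule subgroupI) auto
qed

lemma twisted_subgroup:
  assumes N: "N \<lhd> G" and phi: "\<phi> \<in> hom G G"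
  shows "subgroup {g \<in> carrier G. inv g \<otimes> \<phi> g \<in> N} G"
proof -
  interpret N: normal N G by (rule N)
  interpret p: group_hom G G \<phi>
    by (intro group_hom.intro group_hom_axioms.intro) (simp_all add: phi is_group)
  show ?thesis
  proof (rule subgroupI)
    show "{g \<in> carrier G. inv g \<otimes> \<phi> g \<in> N} \<noteq> {}" using N.one_closed by auto
  next
    fix a assume a: "a \<in> {g \<in> carrier G. inv g \<otimes> \<phi> g \<in> N}"
    then have ac: "a \<in> carrier G" and n: "inv a \<otimes> \<phi> a \<in> N" by auto
    have "a \<otimes> inv (inv a \<otimes> \<phi> a) \<otimes> inv a \<in> N"
      using N.inv_op_closed2[OF ac N.m_inv_closed[OF n]] .
    moreover have "a \<otimes> inv (inv a \<otimes> \<phi> a) \<otimes> inv a = inv (inv a) \<otimes> \<phi> (inv a)"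
      using ac by (simp add: inv_mult_group m_assoc)
    ultimately show "inv a \<in> {g \<in> carrier G. inv g \<otimes> \<phi> g \<in> N}" using ac by simp
  next
    fix a b assume a: "a \<in> {g \<in> carrier G. inv g \<otimes> \<phi> g \<in> N}" and b: "b \<in> {g \<in> carrier G. inv g \<otimes> \<phi> g \<in> N}"
    then have ac: "a \<in> carrier G" and na: "inv a \<otimes> \<phi> a \<in> N"
      and bc: "b \<in> carrier G" and nb: "inv b \<otimes> \<phi> b \<in> N" by auto
    have "inv b \<otimes> (inv a \<otimes> \<phi> a) \<otimes> b \<otimes> (inv b \<otimes> \<phi> b) \<in> N"
      using N.inv_op_closed1[OF bc na] nb by (rule N.m_closed)
    moreover have "inv b \<otimes> (inv a \<otimes> \<phi> a) \<otimes> b \<otimes> (inv b \<otimes> \<phi> b) = inv (a \<otimes> b) \<otimes> \<phi> (a \<otimes> b)"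
      using ac bc by (simp add: inv_mult_group m_assoc inv_cancel_left2)
    ultimately show "a \<otimes> b \<in> {g \<in> carrier G. inv g \<otimes> \<phi> g \<in> N}" using ac bc by simp
  qed auto
qed


lemma comm_central1:
  assumes U: "U \<in> carrier G" and V: "V \<in> carrier G" and A: "A \<in> carrier G"
    and cA: "\<And>Z. Z \<in> carrier G \<Longrightarrow> A \<otimes> Z = Z \<otimes> A"
  shows "commutator G (U \<otimes> A) V = commutator G U V"
proof -
  let ?C = "inv U \<otimes> inv V \<otimes> U \<otimes> V"
  have C: "?C \<in> carrier G" using U V by simp
  have "commutator G (U \<otimes> A) V = inv A \<otimes> (inv U \<otimes> (inv V \<otimes> (U \<otimes> (A \<otimes> V))))"
    using U V A by (simp add: commutator_def inv_mult_group m_assoc)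
  also have "\<dots> = inv A \<otimes> (?C \<otimes> A)"
    using U V A by (simp add: cA[OF V] m_assoc)
  also have "\<dots> = inv A \<otimes> (A \<otimes> ?C)" using cA[OF C] by simp
  also have "\<dots> = ?C" using A C by (simp add: inv_cancel_left)
  finally show ?thesis by (simp add: commutator_def)
qed

lemma comm_central2:
  assumes U: "U \<in> carrier G" and V: "V \<in> carrier G" and B: "B \<in> carrier G"
    and cB: "\<And>Z. Z \<in> carrier G \<Longrightarrow> B \<otimes> Z = Z \<otimes> B"
  shows "commutator G U (V \<otimes> B) = commutator G U V"
proof -
  let ?C = "inv U \<otimes> inv V \<otimes> U \<otimes> V"
  have C: "?C \<in> carrier G" using U V by simp
  have cBi: "inv U \<otimes> inv B = inv B \<otimes> inv U"
    using cB[OF inv_closed[OF U]] U B by (metis inv_closed inv_mult_group inv_inv cB)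
  have "commutator G U (V \<otimes> B) = inv U \<otimes> inv B \<otimes> (inv V \<otimes> (U \<otimes> (V \<otimes> B)))"
    using U V B by (simp add: commutator_def inv_mult_group m_assoc)
  also have "\<dots> = inv B \<otimes> (?C \<otimes> B)"
    using U V B by (simp add: cBi m_assoc)
  also have "\<dots> = inv B \<otimes> (B \<otimes> ?C)" using cB[OF C] by simp
  also have "\<dots> = ?C" using B C by (simp add: inv_cancel_left)
  finally show ?thesis by (simp add: commutator_def)
qed

lemma comm_central:
  assumes U: "U \<in> carrier G" and V: "V \<in> carrier G" and A: "A \<in> carrier G" and B: "B \<in> carrier G"
    and cA: "\<And>Z. Z \<in> carrier G \<Longrightarrow> A \<otimes> Z = Z \<otimes> A"
    and cB: "\<And>Z. Z \<in> carrier G \<Longrightarrow> B \<otimes> Z = Z \<otimes> B"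
  shows "commutator G (U \<otimes> A) (V \<otimes> B) = commutator G U V"
  using comm_central1[OF U _ A cA] comm_central2[OF U V B cB] V B by simp


declare lcs.simps[simp del]

lemma coset_eqD:
  assumes N: "N \<lhd> G" and a: "a \<in> carrier G" and b: "b \<in> carrier G" and e: "N #> a = N #> b"
  shows "inv a \<otimes> b \<in> N"
proof -
  interpret N: normal N G by (rule N)
  have "b \<in> N #> a" using e rcos_self[OF b N.subgroup_axioms] by simp
  then obtain m where m: "m \<in> N" "b = m \<otimes> a" by (auto simp: r_coset_def)
  then show ?thesis using N.inv_op_closed1[OF a m(1)] a N.subset by (simp add: m_assoc)
qed

lemma coset_eqI:
  assumes N: "N \<lhd> G" and a: "a \<in> carrier G" and b: "b \<in> carrier G" and i: "inv a \<otimes> b \<in> N"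
  shows "N #> a = N #> b"
proof -
  interpret N: normal N G by (rule N)
  have m: "a \<otimes> (inv a \<otimes> b) \<otimes> inv a \<in> N" using N.inv_op_closed2[OF a i] .
  have "a \<otimes> (inv a \<otimes> b) \<otimes> inv a \<otimes> a = b" using a b by (simp add: m_assoc inv_cancel_left2)
  then have "b \<in> N #> a" using rcosI[OF m N.subset a] by simp
  then show ?thesis using repr_independence[OF _ a N.subgroup_axioms] by blast
qed

lemma pi_hom: "(\<lambda>a. lcs G k #> a) \<in> hom G (G Mod lcs G k)"
  using normal.r_coset_hom_Mod[OF lcs_normal] .

lemma Q_group: "group (G Mod lcs G k)"
  using normal.factorgroup_is_group[OF lcs_normal] .

lemma pi_central:
  assumes c: "c \<in> lcs G (Suc (Suc 0))" and Z: "Z \<in> carrier (G Mod lcs G (Suc (Suc (Suc 0))))"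
  shows "(lcs G (Suc (Suc (Suc 0))) #> c) \<otimes>\<^bsub>G Mod lcs G (Suc (Suc (Suc 0)))\<^esub> Z =
         Z \<otimes>\<^bsub>G Mod lcs G (Suc (Suc (Suc 0)))\<^esub> (lcs G (Suc (Suc (Suc 0))) #> c)"
proof -
  let ?N = "lcs G (Suc (Suc (Suc 0)))"
  let ?Q = "G Mod ?N"
  obtain z where z: "z \<in> carrier G" "Z = ?N #> z" using Z by (auto simp: FactGroup_def RCOSETS_def)
  have cc: "c \<in> carrier G" using c lcs_sub by blast
  interpret p: group_hom G ?Q "\<lambda>a. ?N #> a"
    by (intro group_hom.intro group_hom_axioms.intro) (rule is_group Q_group pi_hom)+
  have "?N #> (z \<otimes> c) = ?N #> (c \<otimes> z)"
  proof (rule coset_eqI[OF lcs_normal])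
    have "inv (z \<otimes> c) \<otimes> (c \<otimes> z) = commutator G c z"
      using cc z by (simp add: commutator_def inv_mult_group m_assoc)
    then show "inv (z \<otimes> c) \<otimes> (c \<otimes> z) \<in> ?N" using comm_in_lcs[OF c z(1)] by simp
  qed (use cc z in auto)
  then show ?thesis using z cc p.hom_mult by metis
qed


lemma lcs_one: "lcs G (Suc 0) = carrier G" by (simp add: lcs.simps)
lemma lcs_SS: "lcs G (Suc (Suc k)) = generate G (\<Union>x\<in>lcs G (Suc k). \<Union>y\<in>carrier G. {commutator G x y})"
  by (simp add: lcs.simps)

lemma pi_fix:
  assumes phi: "\<phi> \<in> hom G G" and A: "\<forall>g\<in>carrier G. inv g \<otimes> \<phi> g \<in> lcs G (Suc (Suc 0))"
    and c: "c \<in> lcs G (Suc (Suc 0))"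
  shows "lcs G (Suc (Suc (Suc 0))) #> \<phi> c = lcs G (Suc (Suc (Suc 0))) #> c"
proof -
  let ?N = "lcs G (Suc (Suc (Suc 0)))"
  let ?Q = "G Mod ?N"
  let ?p = "\<lambda>a. ?N #> a"
  interpret Q: group ?Q by (rule Q_group)
  interpret p: group_hom G ?Q ?p
    by (intro group_hom.intro group_hom_axioms.intro) (rule is_group Q_group pi_hom)+
  have pphi: "compose (carrier G) ?p \<phi> \<in> hom G ?Q" using hom_compose[OF phi pi_hom] .
  have phic: "\<phi> x \<in> carrier G" if "x \<in> carrier G" for x using phi that by (auto simp: hom_def)
  have E: "subgroup {x \<in> carrier G. compose (carrier G) ?p \<phi> x = ?p x} G"
    by (rule equalizer_subgroup[OF Q_group pphi pi_hom])
  have key: "?p (\<phi> x) = ?p x \<otimes>\<^bsub>?Q\<^esub> ?p (inv x \<otimes> \<phi> x)" if x: "x \<in> carrier G" for x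
  proof -
    have "\<phi> x = x \<otimes> (inv x \<otimes> \<phi> x)" using x phic[OF x] by (simp add: inv_cancel_left2)
    then show ?thesis using x phic[OF x] by (metis p.hom_mult inv_closed m_closed)
  qed
  have cent: "\<And>Z. Z \<in> carrier ?Q \<Longrightarrow> ?p (inv x \<otimes> \<phi> x) \<otimes>\<^bsub>?Q\<^esub> Z = Z \<otimes>\<^bsub>?Q\<^esub> ?p (inv x \<otimes> \<phi> x)"
    if x: "x \<in> carrier G" for x
    using pi_central A x by blast
  have gens: "(\<Union>x\<in>lcs G (Suc 0). \<Union>y\<in>carrier G. {commutator G x y}) \<subseteq> {x \<in> carrier G. compose (carrier G) ?p \<phi> x = ?p x}"
  proof (clarsimp simp: lcs_one)
    fix x y assume x: "x \<in> carrier G" and y: "y \<in> carrier G"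
    have ax: "inv x \<otimes> \<phi> x \<in> carrier G" and ay: "inv y \<otimes> \<phi> y \<in> carrier G"
      using x y phic by auto
    have "?p (\<phi> (commutator G x y)) = ?p (commutator G (\<phi> x) (\<phi> y))"
      using hom_commutator[OF is_group phi x y] by simp
    also have "\<dots> = commutator ?Q (?p (\<phi> x)) (?p (\<phi> y))"
      using hom_commutator[OF Q_group pi_hom phic[OF x] phic[OF y]] .
    also have "\<dots> = commutator ?Q (?p x \<otimes>\<^bsub>?Q\<^esub> ?p (inv x \<otimes> \<phi> x)) (?p y \<otimes>\<^bsub>?Q\<^esub> ?p (inv y \<otimes> \<phi> y))"
      using key x y by simp
    also have "\<dots> = commutator ?Q (?p x) (?p y)"
      by (rule Q.comm_central) (use x y ax ay cent in auto)
    also have "\<dots> = ?p (commutator G x y)"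
      using hom_commutator[OF Q_group pi_hom x y] by simp
    finally show "commutator G x y \<in> carrier G \<and> compose (carrier G) ?p \<phi> (commutator G x y) = ?N #> commutator G x y"
      using x y comm_closed by (simp add: compose_eq)
  qed
  have "lcs G (Suc (Suc 0)) \<subseteq> {x \<in> carrier G. compose (carrier G) ?p \<phi> x = ?p x}"
    using generate_subgroup_incl[OF gens E] lcs_SS[of 0] by simp
  then show ?thesis using c by (auto simp: compose_eq)
qed


lemma pi_cancel:
  assumes s: "\<sigma> \<in> hom G G" and u: "u \<in> carrier G" and v: "v \<in> carrier G"
    and e: "lcs G k #> u = lcs G k #> v"
  shows "lcs G k #> \<sigma> u = lcs G k #> \<sigma> v"
proof -
  interpret sg: group_hom G G \<sigma>
    by (intro group_hom.intro group_hom_axioms.intro) (rule is_group is_group s)+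
  have "inv u \<otimes> v \<in> lcs G k" by (rule coset_eqD[OF lcs_normal u v e])
  then have "\<sigma> (inv u \<otimes> v) \<in> lcs G k" by (rule hom_lcs[OF s])
  then have "inv (\<sigma> u) \<otimes> \<sigma> v \<in> lcs G k" using u v by simp
  then show ?thesis using coset_eqI[OF lcs_normal] u v by simp
qed

lemma pi_commute:
  assumes phi: "\<phi> \<in> hom G G" and A: "\<forall>g\<in>carrier G. inv g \<otimes> \<phi> g \<in> lcs G (Suc (Suc 0))"
    and psi: "\<psi> \<in> hom G G" and B: "\<forall>g\<in>carrier G. inv g \<otimes> \<psi> g \<in> lcs G (Suc (Suc 0))"
    and g: "g \<in> carrier G"
  shows "lcs G (Suc (Suc (Suc 0))) #> \<phi> (\<psi> g) = lcs G (Suc (Suc (Suc 0))) #> \<psi> (\<phi> g)"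
proof -
  let ?N = "lcs G (Suc (Suc (Suc 0)))"
  let ?Q = "G Mod ?N"
  let ?p = "\<lambda>a. ?N #> a"
  interpret Q: group ?Q by (rule Q_group)
  interpret p: group_hom G ?Q ?p
    by (intro group_hom.intro group_hom_axioms.intro) (rule is_group Q_group pi_hom)+
  interpret f: group_hom G G \<phi>
    by (intro group_hom.intro group_hom_axioms.intro) (rule is_group is_group phi)+
  interpret h: group_hom G G \<psi>
    by (intro group_hom.intro group_hom_axioms.intro) (rule is_group is_group psi)+
  define a where "a = inv g \<otimes> \<phi> g"
  define b where "b = inv g \<otimes> \<psi> g"
  have ac: "a \<in> carrier G" and bc: "b \<in> carrier G" using g by (simp_all add: a_def b_def)
  have a2: "a \<in> lcs G (Suc (Suc 0))" and b2: "b \<in> lcs G (Suc (Suc 0))" using A B g a_def b_def by auto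
  have fg: "\<phi> g = g \<otimes> a" and hg: "\<psi> g = g \<otimes> b" using g by (simp_all add: a_def b_def inv_cancel_left2)
  have "?p (\<phi> (\<psi> g)) = ?p (\<phi> g) \<otimes>\<^bsub>?Q\<^esub> ?p (\<phi> b)" using hg g bc by simp
  also have "\<dots> = ?p g \<otimes>\<^bsub>?Q\<^esub> ?p a \<otimes>\<^bsub>?Q\<^esub> ?p b"
    using pi_fix[OF phi A b2] fg g ac by simp
  also have "\<dots> = ?p g \<otimes>\<^bsub>?Q\<^esub> ?p b \<otimes>\<^bsub>?Q\<^esub> ?p a"
  proof -
    have "?p b \<in> carrier ?Q" "?p a \<in> carrier ?Q" "?p g \<in> carrier ?Q" using g ac bc by simp_all
    moreover have "?p a \<otimes>\<^bsub>?Q\<^esub> ?p b = ?p b \<otimes>\<^bsub>?Q\<^esub> ?p a"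
      using pi_central[OF a2, of "?p b"] bc by simp
    ultimately show ?thesis by (metis Q.m_assoc)
  qed
  also have "\<dots> = ?p (\<psi> g) \<otimes>\<^bsub>?Q\<^esub> ?p (\<psi> a)"
    using pi_fix[OF psi B a2] hg g bc by simp
  also have "\<dots> = ?p (\<psi> (\<phi> g))" using fg g ac by simp
  finally show ?thesis .
qed

lemma auto_mult: "f \<in> auto G \<Longrightarrow> h \<in> auto G \<Longrightarrow> f \<otimes>\<^bsub>AutoGroup G\<^esub> h = compose (carrier G) f h"
  by (auto simp: AutoGroup_def BijGroup_def auto_def)

lemma auto_one: "\<one>\<^bsub>AutoGroup G\<^esub> = (\<lambda>x\<in>carrier G. x)"
  by (simp add: AutoGroup_def BijGroup_def)

lemma auto_carrier: "carrier (AutoGroup G) = auto G"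
  by (simp add: AutoGroup_def)

lemma auto_hom: "f \<in> auto G \<Longrightarrow> f \<in> hom G G"
  by (simp add: auto_def)

lemma auto_closed: "f \<in> auto G \<Longrightarrow> x \<in> carrier G \<Longrightarrow> f x \<in> carrier G"
  by (auto simp: auto_def hom_def)

lemma auto_inv_apply:
  assumes f: "f \<in> auto G" and x: "x \<in> carrier G"
  shows "(inv\<^bsub>AutoGroup G\<^esub> f) (f x) = x" and "f ((inv\<^bsub>AutoGroup G\<^esub> f) x) = x"
proof -
  interpret AG: group "AutoGroup G" by (rule AutoGroup)
  have i: "inv\<^bsub>AutoGroup G\<^esub> f \<in> auto G" using AG.inv_closed f by (simp add: auto_carrier)
  have "inv\<^bsub>AutoGroup G\<^esub> f \<otimes>\<^bsub>AutoGroup G\<^esub> f = \<one>\<^bsub>AutoGroup G\<^esub>"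
    using AG.l_inv f by (simp add: auto_carrier)
  then show "(inv\<^bsub>AutoGroup G\<^esub> f) (f x) = x"
    using i f x by (metis auto_mult auto_one compose_eq restrict_apply')
  have "f \<otimes>\<^bsub>AutoGroup G\<^esub> inv\<^bsub>AutoGroup G\<^esub> f = \<one>\<^bsub>AutoGroup G\<^esub>"
    using AG.r_inv f by (simp add: auto_carrier)
  then show "f ((inv\<^bsub>AutoGroup G\<^esub> f) x) = x"
    using i f x by (metis auto_mult auto_one compose_eq restrict_apply')
qed

end

definition AA :: "('a, 'b) monoid_scheme \<Rightarrow> nat \<Rightarrow> ('a \<Rightarrow> 'a) set" where
  "AA G k = {\<phi> \<in> auto G. \<forall>g \<in> carrier G. inv\<^bsub>G\<^esub> g \<otimes>\<^bsub>G\<^esub> \<phi> g \<in> lcs G (Suc k)}"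

context group begin

lemma AA_subgroup: "subgroup (AA G k) (AutoGroup G)"
proof -
  interpret AG: group "AutoGroup G" by (rule AutoGroup)
  interpret N: subgroup "lcs G (Suc k)" G by (rule lcs_subgroup)
  show ?thesis
  proof (rule AG.subgroupI)
    show "AA G k \<subseteq> carrier (AutoGroup G)" by (auto simp: AA_def auto_carrier)
  next
    have "\<one>\<^bsub>AutoGroup G\<^esub> \<in> AA G k"
      using id_in_auto by (auto simp: AA_def auto_one)
    then show "AA G k \<noteq> {}" by blast
  next
    fix f assume f: "f \<in> AA G k"
    then have fa: "f \<in> auto G" by (simp add: AA_def)
    let ?t = "inv\<^bsub>AutoGroup G\<^esub> f"
    have t: "?t \<in> auto G" using AG.inv_closed fa by (simp add: auto_carrier)
    have "inv g \<otimes> ?t g \<in> lcs G (Suc k)" if g: "g \<in> carrier G" for g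
    proof -
      have h: "?t g \<in> carrier G" using auto_closed[OF t g] .
      have fh: "f (?t g) = g" using auto_inv_apply(2)[OF fa g] .
      have "inv (inv (?t g) \<otimes> f (?t g)) \<in> lcs G (Suc k)" using f h by (auto simp: AA_def)
      then show ?thesis using fh h g by (simp add: inv_mult_group)
    qed
    then show "?t \<in> AA G k" using t by (simp add: AA_def)
  next
    fix f h assume f: "f \<in> AA G k" and h: "h \<in> AA G k"
    then have fa: "f \<in> auto G" and ha: "h \<in> auto G" by (simp_all add: AA_def)
    have "inv g \<otimes> f (h g) \<in> lcs G (Suc k)" if g: "g \<in> carrier G" for g
    proof -
      interpret fh: group_hom G G f
        by (intro group_hom.intro group_hom_axioms.intro) (rule is_group is_group auto_hom[OF fa])+
      have hg: "h g \<in> carrier G" using auto_closed[OF ha g] .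
      have 1: "inv g \<otimes> f g \<in> lcs G (Suc k)" using f g by (simp add: AA_def)
      have "f (inv g \<otimes> h g) \<in> lcs G (Suc k)"
        using hom_lcs[OF auto_hom[OF fa]] h g by (simp add: AA_def)
      then have 2: "inv (f g) \<otimes> f (h g) \<in> lcs G (Suc k)" using g hg by simp
      have "(inv g \<otimes> f g) \<otimes> (inv (f g) \<otimes> f (h g)) = inv g \<otimes> f (h g)"
        using g hg by (simp add: m_assoc inv_cancel_left2)
      then show ?thesis using N.m_closed[OF 1 2] by simp
    qed
    moreover have "f \<otimes>\<^bsub>AutoGroup G\<^esub> h \<in> auto G" using AG.m_closed fa ha by (simp add: auto_carrier)
    ultimately show "f \<otimes>\<^bsub>AutoGroup G\<^esub> h \<in> AA G k"
      using fa ha by (simp add: AA_def auto_mult compose_eq)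
  qed
qed

lemma AA_comm:
  assumes f: "f \<in> AA G 1" and h: "h \<in> AA G 1"
  shows "commutator (AutoGroup G) f h \<in> AA G 2"
proof -
  interpret AG: group "AutoGroup G" by (rule AutoGroup)
  let ?N = "lcs G (Suc (Suc (Suc 0)))"
  have fa: "f \<in> auto G" and ha: "h \<in> auto G" using f h by (simp_all add: AA_def)
  have fA: "\<forall>g\<in>carrier G. inv g \<otimes> f g \<in> lcs G (Suc (Suc 0))"
   and hA: "\<forall>g\<in>carrier G. inv g \<otimes> h g \<in> lcs G (Suc (Suc 0))" using f h by (simp_all add: AA_def)
  let ?t = "commutator (AutoGroup G) f h"
  have fc: "f \<in> carrier (AutoGroup G)" and hc: "h \<in> carrier (AutoGroup G)" using fa ha by (simp_all add: auto_carrier)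
  have tc: "?t \<in> carrier (AutoGroup G)" using fc hc by (simp add: commutator_def)
  then have ta: "?t \<in> auto G" by (simp add: auto_carrier)
  have eq: "h \<otimes>\<^bsub>AutoGroup G\<^esub> f \<otimes>\<^bsub>AutoGroup G\<^esub> ?t = f \<otimes>\<^bsub>AutoGroup G\<^esub> h"
    using fc hc by (simp add: commutator_def AG.m_assoc AG.inv_cancel_left2)
  have "inv g \<otimes> ?t g \<in> ?N" if g: "g \<in> carrier G" for g
  proof -
    have tg: "?t g \<in> carrier G" using auto_closed[OF ta g] .
    have hf: "h \<otimes>\<^bsub>AutoGroup G\<^esub> f \<in> auto G" using AG.m_closed fc hc by (simp add: auto_carrier)
    have "(h \<otimes>\<^bsub>AutoGroup G\<^esub> f \<otimes>\<^bsub>AutoGroup G\<^esub> ?t) g = (f \<otimes>\<^bsub>AutoGroup G\<^esub> h) g"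
      using eq by simp
    then have e1: "h (f (?t g)) = f (h g)"
      using g tg fa ha ta hf auto_closed by (simp add: auto_mult compose_eq)
    have "?N #> h (f (?t g)) = ?N #> h (f g)"
      using e1 pi_commute[OF auto_hom[OF fa] fA auto_hom[OF ha] hA g] by simp
    then have "?N #> (inv\<^bsub>AutoGroup G\<^esub> h) (h (f (?t g))) = ?N #> (inv\<^bsub>AutoGroup G\<^esub> h) (h (f g))"
      using pi_cancel[OF auto_hom] AG.inv_closed hc auto_closed fa ha g tg
      by (metis auto_carrier)
    then have "?N #> f (?t g) = ?N #> f g"
      using auto_inv_apply(1)[OF ha] auto_closed[OF fa] g tg by simp
    then have "?N #> (inv\<^bsub>AutoGroup G\<^esub> f) (f (?t g)) = ?N #> (inv\<^bsub>AutoGroup G\<^esub> f) (f g)"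
      using pi_cancel[OF auto_hom] AG.inv_closed fc auto_closed fa g tg
      by (metis auto_carrier)
    then have "?N #> ?t g = ?N #> g"
      using auto_inv_apply(1)[OF fa] g tg by simp
    then show ?thesis using coset_eqD[OF lcs_normal g tg] by simp
  qed
  then show ?thesis using ta by (simp add: AA_def numeral_2_eq_2)
qed

end



declare lcs.simps[simp del]

lemma gen_in_carrier: "l \<in> {1..n} \<Longrightarrow> [(l, b)] \<in> carrier (free_group n)"
  by (simp add: fg_carrier)

lemma inv_gen: "l \<in> {1..n} \<Longrightarrow> inv\<^bsub>free_group n\<^esub> [(l, True)] = [(l, False)]"
  by (rule group.inv_equality[OF group_fg])
     (simp_all add: fg_mult fg_one reduce_foldr stp_def cancels_def gen_in_carrier)

lemma fg_gen:
  assumes H: "subgroup H (free_group n)" and gens: "\<And>l. l \<in> {1..n} \<Longrightarrow> [(l, True)] \<in> H"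
  shows "carrier (free_group n) \<subseteq> H"
proof
  fix w assume "w \<in> carrier (free_group n)"
  then show "w \<in> H"
  proof (induction w)
    case Nil then show ?case using subgroup.one_closed[OF H] by (simp add: fg_one)
  next
    case (Cons a w)
    have rw: "reduced (a # w)" and la: "fst a \<in> {1..n}" and lw: "\<forall>x\<in>set w. fst x \<in> {1..n}"
      using Cons.prems by (auto simp: fg_carrier)
    have wc: "w \<in> carrier (free_group n)" using rw lw reduced_tl by (auto simp: fg_carrier)
    have aH: "[a] \<in> H"
    proof (cases "snd a")
      case True then show ?thesis using gens[OF la] by (cases a) auto
    next
      case False
      then have "[a] = inv\<^bsub>free_group n\<^esub> [(fst a, True)]" using inv_gen[OF la] by (cases a) auto
      then show ?thesis using subgroup.m_inv_closed[OF H gens[OF la]] by simp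
    qed
    have "[a] \<otimes>\<^bsub>free_group n\<^esub> w = a # w"
      using reduce_reduced[OF rw] by (simp add: fg_mult)
    then show ?case using subgroup.m_closed[OF H aH Cons.IH[OF wc]] by simp
  qed
qed

lemma subst_hom_gen:
  assumes "l \<in> {1..n}" "reduced (f l)"
  shows "subst_hom n f [(l, True)] = f l"
  using assms by (simp add: subst_hom_EE gen_in_carrier EE_def ev_def reduce_reduced)

lemma id_hom_fg: "(\<lambda>x\<in>carrier (free_group n). x) \<in> hom (free_group n) (free_group n)"
  by (rule homI) (simp_all add: group.is_monoid[OF group_fg] monoid.m_closed)

lemma subst_hom_inverse:
  assumes f: "\<And>l. l \<in> {1..n} \<Longrightarrow> f l \<in> carrier (free_group n)"
    and g: "\<And>l. l \<in> {1..n} \<Longrightarrow> g l \<in> carrier (free_group n)"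
    and fg: "\<And>l. l \<in> {1..n} \<Longrightarrow> subst_hom n f (g l) = [(l, True)]"
    and w: "w \<in> carrier (free_group n)"
  shows "subst_hom n f (subst_hom n g w) = w"
proof -
  let ?F = "free_group n"
  have hf: "subst_hom n f \<in> hom ?F ?F" by (rule subst_hom_hom[OF f])
  have hg: "subst_hom n g \<in> hom ?F ?F" by (rule subst_hom_hom[OF g])
  have E: "subgroup {x \<in> carrier ?F. (subst_hom n f \<circ> subst_hom n g) x = (\<lambda>x\<in>carrier ?F. x) x} ?F"
    by (rule group.equalizer_subgroup[OF group_fg group_fg hom_compose[OF hg hf] id_hom_fg])
  have "carrier ?F \<subseteq> {x \<in> carrier ?F. (subst_hom n f \<circ> subst_hom n g) x = (\<lambda>x\<in>carrier ?F. x) x}"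
  proof (rule fg_gen[OF E])
    fix l assume l: "l \<in> {1..n}"
    have "subst_hom n g [(l, True)] = g l"
      using subst_hom_gen[OF l] g[OF l] by (simp add: fg_carrier)
    then show "[(l, True)] \<in> {x \<in> carrier ?F. (subst_hom n f \<circ> subst_hom n g) x = (\<lambda>x\<in>carrier ?F. x) x}"
      using fg[OF l] gen_in_carrier[OF l] by simp
  qed
  then show ?thesis using w by auto
qed

definition xf :: "nat \<Rightarrow> nat \<Rightarrow> nat \<Rightarrow> letter list" where
  "xf i j = (\<lambda>l. if l = i then [(j, False), (i, True), (j, True)] else [(l, True)])"

definition xf' :: "nat \<Rightarrow> nat \<Rightarrow> nat \<Rightarrow> letter list" where
  "xf' i j = (\<lambda>l. if l = i then [(j, True), (i, True), (j, False)] else [(l, True)])"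

lemma xi_xf: "xi n i j = subst_hom n (xf i j)"
  by (simp add: xi_def xf_def)

context
  fixes n i j :: nat assumes ij: "i \<in> {1..n}" "j \<in> {1..n}" "i \<noteq> j"
begin

lemma xf_carrier: "l \<in> {1..n} \<Longrightarrow> xf i j l \<in> carrier (free_group n)"
  using ij by (auto simp: xf_def fg_carrier cancels_def)

lemma xf'_carrier: "l \<in> {1..n} \<Longrightarrow> xf' i j l \<in> carrier (free_group n)"
  using ij by (auto simp: xf'_def fg_carrier cancels_def)

lemma xf_xf': "l \<in> {1..n} \<Longrightarrow> subst_hom n (xf i j) (xf' i j l) = [(l, True)]"
  using ij xf'_carrier
  by (auto simp: subst_hom_EE EE_def ev_def xf_def xf'_def reduce_foldr stp_def cancels_def inv_word_def)

lemma xf'_xf: "l \<in> {1..n} \<Longrightarrow> subst_hom n (xf' i j) (xf i j l) = [(l, True)]"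
  using ij xf_carrier
  by (auto simp: subst_hom_EE EE_def ev_def xf_def xf'_def reduce_foldr stp_def cancels_def inv_word_def)

lemma xi_auto: "xi n i j \<in> auto (free_group n)"
proof -
  let ?F = "free_group n"
  have h: "subst_hom n (xf i j) \<in> hom ?F ?F" by (rule subst_hom_hom[OF xf_carrier])
  have h': "subst_hom n (xf' i j) \<in> hom ?F ?F" by (rule subst_hom_hom[OF xf'_carrier])
  have "bij_betw (subst_hom n (xf i j)) (carrier ?F) (carrier ?F)"
  proof (rule bij_betwI)
    show "subst_hom n (xf i j) \<in> carrier ?F \<rightarrow> carrier ?F" using h by (simp add: hom_def)
    show "subst_hom n (xf' i j) \<in> carrier ?F \<rightarrow> carrier ?F" using h' by (simp add: hom_def)
    show "subst_hom n (xf' i j) (subst_hom n (xf i j) x) = x" if "x \<in> carrier ?F" for x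
      by (rule subst_hom_inverse[OF xf'_carrier xf_carrier xf'_xf that])
    show "subst_hom n (xf i j) (subst_hom n (xf' i j) x) = x" if "x \<in> carrier ?F" for x
      by (rule subst_hom_inverse[OF xf_carrier xf'_carrier xf_xf' that])
  qed
  moreover have "subst_hom n (xf i j) \<in> extensional (carrier ?F)"
    by (simp add: subst_hom_def)
  ultimately show ?thesis using h by (simp add: auto_def Bij_def xi_xf)
qed

lemma xi_AA: "xi n i j \<in> AA (free_group n) 1"
proof -
  let ?F = "free_group n"
  let ?N = "lcs ?F (Suc (Suc 0))"
  have hom: "xi n i j \<in> hom ?F ?F" using xi_auto by (simp add: auto_def)
  have S: "subgroup {g \<in> carrier ?F. inv\<^bsub>?F\<^esub> g \<otimes>\<^bsub>?F\<^esub> xi n i j g \<in> ?N} ?F"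
    by (rule group.twisted_subgroup[OF group_fg group.lcs_normal[OF group_fg] hom])
  have "carrier ?F \<subseteq> {g \<in> carrier ?F. inv\<^bsub>?F\<^esub> g \<otimes>\<^bsub>?F\<^esub> xi n i j g \<in> ?N}"
  proof (rule fg_gen[OF S])
    fix l assume l: "l \<in> {1..n}"
    show "[(l, True)] \<in> {g \<in> carrier ?F. inv\<^bsub>?F\<^esub> g \<otimes>\<^bsub>?F\<^esub> xi n i j g \<in> ?N}"
    proof (cases "l = i")
      case True
      have x: "xi n i j [(l, True)] = [(j, False), (i, True), (j, True)]"
        using subst_hom_gen[OF l, of "xf i j"] True ij by (simp add: xi_xf xf_def cancels_def)
      have "inv\<^bsub>?F\<^esub> [(l, True)] \<otimes>\<^bsub>?F\<^esub> xi n i j [(l, True)] = commutator ?F [(i, True)] [(j, True)]"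
        using x True ij inv_gen[OF l] inv_gen[of j n]
        by (simp add: commutator_def fg_mult reduce_foldr stp_def cancels_def)
      moreover have "commutator ?F [(i, True)] [(j, True)] \<in> ?N"
        using group.comm_in_lcs[OF group_fg[of n], of "[(i, True)]" 0 "[(j, True)]"] ij gen_in_carrier
        by (simp add: group.lcs_one[OF group_fg])
      ultimately show ?thesis using gen_in_carrier[OF l] by simp
    next
      case False
      have x: "xi n i j [(l, True)] = [(l, True)]"
        using subst_hom_gen[OF l, of "xf i j"] False by (simp add: xi_xf xf_def)
      have "inv\<^bsub>?F\<^esub> [(l, True)] \<otimes>\<^bsub>?F\<^esub> [(l, True)] = \<one>\<^bsub>?F\<^esub>"
        using group.l_inv[OF group_fg gen_in_carrier[OF l]] .
      then show ?thesis using x gen_in_carrier[OF l] subgroup.one_closed[OF group.lcs_subgroup[OF group_fg]]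
        by simp
    qed
  qed
  then show ?thesis using xi_auto by (auto simp: AA_def)
qed

end



lemma tau1_coset:
  assumes AG: "group (AutF n)" and A2: "subgroup (Andreadakis n 2) (AutF n)"
    and Gam: "subgroup Gm (AutF n)" and GA: "Gm \<subseteq> Andreadakis n 2"
    and a: "a \<in> carrier (AutF n)"
  shows "tau1 n (Gm #>\<^bsub>AutF n\<^esub> a) = Andreadakis n 2 #>\<^bsub>AutF n\<^esub> a"
proof -
  interpret AG: group "AutF n" by (rule AG)
  have A2s: "Andreadakis n 2 \<subseteq> carrier (AutF n)" using A2 subgroup.subset by blast
  have Gs: "Gm \<subseteq> carrier (AutF n)" using Gam subgroup.subset by blast
  show ?thesis
  proof
    show "tau1 n (Gm #>\<^bsub>AutF n\<^esub> a) \<subseteq> Andreadakis n 2 #>\<^bsub>AutF n\<^esub> a"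
    proof
      fix x assume "x \<in> tau1 n (Gm #>\<^bsub>AutF n\<^esub> a)"
      then obtain c where c: "c \<in> Gm #>\<^bsub>AutF n\<^esub> a" "x \<in> Andreadakis n 2 #>\<^bsub>AutF n\<^esub> c"
        by (auto simp: tau1_def)
      from c(1) obtain g where g: "g \<in> Gm" "c = g \<otimes>\<^bsub>AutF n\<^esub> a" by (auto simp: r_coset_def)
      have gc: "g \<in> carrier (AutF n)" using g Gs by blast
      have "Andreadakis n 2 #>\<^bsub>AutF n\<^esub> c = (Andreadakis n 2 #>\<^bsub>AutF n\<^esub> g) #>\<^bsub>AutF n\<^esub> a"
        using AG.coset_mult_assoc[OF A2s gc a] g by simp
      also have "\<dots> = Andreadakis n 2 #>\<^bsub>AutF n\<^esub> a"
        using AG.coset_join2[OF gc A2] g GA by auto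
      finally show "x \<in> Andreadakis n 2 #>\<^bsub>AutF n\<^esub> a" using c by simp
    qed
  next
    show "Andreadakis n 2 #>\<^bsub>AutF n\<^esub> a \<subseteq> tau1 n (Gm #>\<^bsub>AutF n\<^esub> a)"
    proof
      fix x assume x: "x \<in> Andreadakis n 2 #>\<^bsub>AutF n\<^esub> a"
      have "a \<in> Gm #>\<^bsub>AutF n\<^esub> a" using AG.rcos_self[OF a Gam] .
      then show "x \<in> tau1 n (Gm #>\<^bsub>AutF n\<^esub> a)" using x by (auto simp: tau1_def)
    qed
  qed
qed

theorem proposition2p2p7:
  fixes n :: nat and B :: "(letter list \<Rightarrow> letter list) set"
  assumes "n \<ge> 2"
    and "subgroup B (AutF n)"
    and "B \<subseteq> McCool n"
    and "inj_on (tau1 n) (carrier (gr1 n B))"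
  shows "Andreadakis n 2 \<inter> B = lcs (subgrp n B) 2"
proof -
  let ?F = "free_group n"
  let ?AG = "AutF n"
  let ?SB = "subgrp n B"
  have AGg: "group ?AG" by (rule group.AutoGroup[OF group_fg])
  interpret AG: group ?AG by (rule AGg)
  have Bs: "subgroup B ?AG" by (rule assms(2))
  have A1eq: "Andreadakis n 1 = AA ?F 1" by (simp add: Andreadakis_def AA_def)
  have A2eq: "Andreadakis n 2 = AA ?F 2" by (simp add: Andreadakis_def AA_def)
  have A1sg: "subgroup (AA ?F 1) ?AG" by (rule group.AA_subgroup[OF group_fg])
  have A2sg: "subgroup (Andreadakis n 2) ?AG" unfolding A2eq by (rule group.AA_subgroup[OF group_fg])
  have "{xi n i j | i j. i \<in> {1..n} \<and> j \<in> {1..n} \<and> i \<noteq> j} \<subseteq> AA ?F 1"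
    using xi_AA by blast
  then have "McCool n \<subseteq> AA ?F 1"
    unfolding McCool_def by (rule AG.generate_subgroup_incl[OF _ A1sg])
  then have BA1: "B \<subseteq> AA ?F 1" using assms(3) by blast
  let ?T = "\<Union>x\<in>B. \<Union>y\<in>B. {commutator ?AG x y}"
  have Bc: "B \<subseteq> carrier ?AG" using Bs subgroup.subset by blast
  have comm_eq: "commutator ?SB x y = commutator ?AG x y" if "x \<in> B" "y \<in> B" for x y
    using that AG.m_inv_consistent[OF Bs] by (simp add: commutator_def)
  have lcs2: "lcs ?SB 2 = generate ?SB ?T"
  proof -
    have "lcs ?SB 2 = generate ?SB (\<Union>x\<in>B. \<Union>y\<in>B. {commutator ?SB x y})"
      by (simp add: numeral_2_eq_2 lcs.simps)
    also have "(\<Union>x\<in>B. \<Union>y\<in>B. {commutator ?SB x y}) = ?T" using comm_eq by auto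
    finally show ?thesis .
  qed
  have TB: "?T \<subseteq> B" using Bs by (auto simp: commutator_def subgroup.m_closed subgroup.m_inv_closed)
  have TA2: "?T \<subseteq> Andreadakis n 2"
  proof clarify
    fix x y assume x: "x \<in> B" and y: "y \<in> B"
    show "commutator ?AG x y \<in> Andreadakis n 2"
      using group.AA_comm[OF group_fg[of n], of x y] BA1 x y A2eq by blast
  qed
  have Geq: "lcs ?SB 2 = generate ?AG ?T" using lcs2 AG.generate_consistent[OF TB Bs] by simp
  have Gsg: "subgroup (lcs ?SB 2) ?AG" using Geq AG.generate_is_subgroup TB Bc by auto
  have GA2: "lcs ?SB 2 \<subseteq> Andreadakis n 2" using Geq AG.generate_subgroup_incl[OF TA2 A2sg] by simp
  have GB: "lcs ?SB 2 \<subseteq> B" using Geq AG.generate_subgroup_incl[OF TB Bs] by simp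
  have rc: "r_coset ?SB H a = r_coset ?AG H a" for H a by (simp add: r_coset_def)
  have carr: "carrier (gr1 n B) = (\<Union>a\<in>B. {lcs ?SB 2 #>\<^bsub>?AG\<^esub> a})"
    by (simp add: FactGroup_def RCOSETS_def rc)
  show ?thesis
  proof
    show "Andreadakis n 2 \<inter> B \<subseteq> lcs ?SB 2"
    proof
      fix b assume b: "b \<in> Andreadakis n 2 \<inter> B"
      have bc: "b \<in> carrier ?AG" using b Bc by blast
      have one: "\<one>\<^bsub>?AG\<^esub> \<in> B" using subgroup.one_closed[OF Bs] .
      have "tau1 n (lcs ?SB 2 #>\<^bsub>?AG\<^esub> b) = Andreadakis n 2 #>\<^bsub>?AG\<^esub> b"
        by (rule tau1_coset[OF AGg A2sg Gsg GA2 bc])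
      also have "\<dots> = Andreadakis n 2" using AG.coset_join2[OF bc A2sg] b by blast
      also have "\<dots> = Andreadakis n 2 #>\<^bsub>?AG\<^esub> \<one>\<^bsub>?AG\<^esub>"
        using A2sg subgroup.subset by (metis AG.coset_mult_one)
      also have "\<dots> = tau1 n (lcs ?SB 2 #>\<^bsub>?AG\<^esub> \<one>\<^bsub>?AG\<^esub>)"
        by (rule tau1_coset[OF AGg A2sg Gsg GA2 AG.one_closed, symmetric])
      finally have "lcs ?SB 2 #>\<^bsub>?AG\<^esub> b = lcs ?SB 2 #>\<^bsub>?AG\<^esub> \<one>\<^bsub>?AG\<^esub>"
        using inj_onD[OF assms(4)] carr b one by blast
      also have "\<dots> = lcs ?SB 2" using Gsg subgroup.subset by (metis AG.coset_mult_one)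
      finally show "b \<in> lcs ?SB 2" using AG.coset_join1[OF _ bc Gsg] by blast
    qed
  next
    show "lcs ?SB 2 \<subseteq> Andreadakis n 2 \<inter> B" using GA2 GB by blast
  qed
qed

end
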